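(* In the setting below, let $\Omega$ have the inner $\epsilon$-ball property for some $\epsilon>0$, let $0<m\le f_\mu\le M<\infty$ on $\Omega$, let $p>n$, $p\ge4$ with $M_p:=\int|x|^pd\nu<\infty$, and let $q$ satisfy $\frac1p+\frac1q=1$. Assume that $\phi_\mu$ and all $\phi_{\mu;R}$ are Hölder continuous on $\Omega$ with exponent $1-\frac np$ and a common constant $C_H$ (as holds under these assumptions by a result of Berman–Berndtsson), and that $\|\phi_{\mu;R}-\phi_\mu\|_{L^1(\Omega)}\le h(R)$ with $h(R)\to0$ as $R\to\infty$. Then there exist $R_0>0$ and $C=C(n,p,\Omega,m,M,C_H)$ such that for all $R\ge R_0$, $$\max_{x\in\Omega}|\phi_{\mu;R}(x)-\phi_\mu(x)|\le C\,h(R)^{\frac{1-n/p}{1+n/q}}.$$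
   Context: Setting: $\Omega\subset\mathbb{R}^n$ compact convex with nonempty interior; $\mu$ a probability measure with density $f_\mu$, $\mathrm{spt}(\mu)=\Omega$; $\nu$ a probability measure on $\mathbb{R}^n$ with a density and finite second moment; $\nu_R(E):=\nu(E\cap B_R(0))/\nu(B_R(0))$. Cost $\frac12|x-y|^2$. $\phi_\mu$ ($\phi_{\mu;R}$) is the Brenier potential for $\mu\to\nu$ ($\mu\to\nu_R$): convex, whose gradient is the optimal transport map $\mu$-a.e.; constants fixed by $\int_\Omega\phi_\mu\,dx=\int_\Omega\phi_{\mu;R}\,dx=0$. A closed set $A$ has the inner $\epsilon$-ball property if there is a set $A'$ with $A=\bigcup_{x\in A'}\overline{B_\epsilon(x)}$. *)

theory Defs
  imports "HOL-Probability.Probability"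
begin

definition measure_support :: "'a::metric_space measure \<Rightarrow> 'a set" where
  "measure_support \<mu> = {x. \<forall>e>0. emeasure \<mu> (ball x e) > 0}"

definition trunc_measure :: "'a::real_normed_vector measure \<Rightarrow> real \<Rightarrow> 'a measure" where
  "trunc_measure \<nu> R =
     scale_measure (ennreal (1 / measure \<nu> (ball 0 R))) (density \<nu> (indicator (ball 0 R)))"

definition pushes_forward :: "'a::euclidean_space measure \<Rightarrow> 'a measure \<Rightarrow> ('a \<Rightarrow> 'a) \<Rightarrow> bool" where
  "pushes_forward \<mu> \<nu> T \<longleftrightarrow> T \<in> borel_measurable \<mu> \<and> distr \<mu> borel T = \<nu>"

definition transport_cost :: "'a::euclidean_space measure \<Rightarrow> ('a \<Rightarrow> 'a) \<Rightarrow> ennreal" where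
  "transport_cost \<mu> T = (\<integral>\<^sup>+ x. ennreal ((norm (x - T x))\<^sup>2 / 2) \<partial>\<mu>)"

definition optimal_map :: "'a::euclidean_space measure \<Rightarrow> 'a measure \<Rightarrow> ('a \<Rightarrow> 'a) \<Rightarrow> bool" where
  "optimal_map \<mu> \<nu> T \<longleftrightarrow> pushes_forward \<mu> \<nu> T \<and>
     (\<forall>S. pushes_forward \<mu> \<nu> S \<longrightarrow> transport_cost \<mu> T \<le> transport_cost \<mu> S)"

definition brenier_potential ::
  "'a::euclidean_space set \<Rightarrow> 'a measure \<Rightarrow> 'a measure \<Rightarrow> ('a \<Rightarrow> real) \<Rightarrow> bool" where
  "brenier_potential \<Omega> \<mu> \<nu> \<phi> \<longleftrightarrow> convex_on \<Omega> \<phi> \<and>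
     (\<exists>T. optimal_map \<mu> \<nu> T \<and>
          (AE x in \<mu>. (\<phi> has_derivative (\<lambda>v. T x \<bullet> v)) (at x within \<Omega>))) \<and>
     (\<phi> has_integral 0) \<Omega>"

definition inner_ball_property :: "'a::metric_space set \<Rightarrow> real \<Rightarrow> bool" where
  "inner_ball_property A \<epsilon> \<longleftrightarrow> closed A \<and> (\<exists>A'. A = (\<Union>x\<in>A'. cball x \<epsilon>))"

end

theory Submission
  imports Defs
begin

lemma cont_int: fixes f :: "'a::euclidean_space \<Rightarrow> real"
  assumes "compact S" "continuous_on S f" shows "f integrable_on S"
proof -
  have "integrable lborel (\<lambda>x. indicator S x *\<^sub>R f x)" by (rule borel_integrable_compact[OF assms])
  then have "set_integrable lborel S f" by (simp add: set_integrable_def)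
  then show ?thesis by (simp add: set_borel_integral_eq_integral(1))
qed

lemma holder_cont:
  fixes g :: "'a::metric_space \<Rightarrow> real"
  assumes a: "\<alpha> > 0" and L: "L > 0" and H: "\<forall>x\<in>S. \<forall>y\<in>S. \<bar>g x - g y\<bar> \<le> L * dist x y powr \<alpha>"
  shows "continuous_on S g"
  unfolding continuous_on_iff
proof (intro ballI allI impI)
  fix x e assume x: "x \<in> S" and e: "(0::real) < e"
  define d where "d = (e / (2 * L)) powr (1 / \<alpha>)"
  have dp: "d > 0" using e L by (simp add: d_def)
  have da: "d powr \<alpha> = e / (2 * L)" using e L a by (simp add: d_def powr_powr)
  show "\<exists>d>0. \<forall>y\<in>S. dist y x < d \<longrightarrow> dist (g y) (g x) < e"
  proof (intro exI[of _ d] conjI ballI impI dp)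
    fix y assume y: "y \<in> S" and dy: "dist y x < d"
    have "dist y x powr \<alpha> < d powr \<alpha>" using dy a by (intro powr_less_mono2) auto
    then have "L * dist y x powr \<alpha> < L * d powr \<alpha>" using L by simp
    also have "\<dots> = e / 2" using L da by simp
    also have "\<dots> < e" using e by simp
    finally have lt: "L * dist y x powr \<alpha> < e" .
    have "\<bar>g y - g x\<bar> \<le> L * dist y x powr \<alpha>" using H x y by blast
    then show "dist (g y) (g x) < e" using lt by (simp add: dist_real_def)
  qed
qed

lemma vol: fixes \<Omega> :: "'a::euclidean_space set"
  assumes "compact \<Omega>" "convex \<Omega>" "interior \<Omega> \<noteq> {}"
  shows "\<exists>\<kappa>>0. \<exists>\<rho>>0. \<forall>x\<in>\<Omega>. \<forall>r. 0 < r \<and> r \<le> \<rho> \<longrightarrow> \<kappa> * r ^ DIM('a) \<le> measure lebesgue (\<Omega> \<inter> cball x r)"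
proof -
  obtain a s where s: "s > 0" "ball a s \<subseteq> \<Omega>"
    using assms(3) by (metis all_not_in_conv mem_interior)
  obtain D where D: "\<And>x. x \<in> \<Omega> \<Longrightarrow> dist a x \<le> D"
    using compact_imp_bounded[OF assms(1)] by (meson bounded_any_center)
  have D0: "D \<ge> 0" proof -
    have "a \<in> \<Omega>" using s by auto
    then show ?thesis using D[of a] by simp
  qed
  define \<kappa> where "\<kappa> = (s / (D + s)) ^ DIM('a) * Henstock_Kurzweil_Integration.content (ball (0::'a) 1)"
  have k0: "\<kappa> > 0" unfolding \<kappa>_def using s D0 by (simp add: content_ball_pos)
  have main: "\<kappa> * r ^ DIM('a) \<le> measure lebesgue (\<Omega> \<inter> cball x r)" if x: "x \<in> \<Omega>" and r: "0 < r" "r \<le> D + s" for x r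
  proof -
    define t where "t = r / (D + s)"
    have t: "0 < t" "t \<le> 1" using r s D0 by (auto simp: t_def)
    define c where "c = x + t *\<^sub>R (a - x)"
    have sub: "ball c (t * s) \<subseteq> \<Omega> \<inter> cball x r"
    proof
      fix y assume y: "y \<in> ball c (t * s)"
      define z where "z = x + (1 / t) *\<^sub>R (y - x)"
      have yz: "y = (1 - t) *\<^sub>R x + t *\<^sub>R z" using t by (simp add: z_def algebra_simps)
      have "z - a = (1 / t) *\<^sub>R (y - c)" using t by (simp add: z_def c_def algebra_simps)
      then have "norm (z - a) = norm (y - c) / t" using t by simp
      then have "dist a z = dist c y / t" by (simp add: dist_norm norm_minus_commute)
      also have "\<dots> < s" using y t by (simp add: divide_less_eq mult.commute)
      finally have za: "z \<in> ball a s" by simp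
      then have "z \<in> \<Omega>" using s by blast
      then have "y \<in> \<Omega>" using yz assms(2) x t by (simp add: convex_def)
      moreover have "dist x y \<le> r"
      proof -
        have "y - x = t *\<^sub>R (z - x)" using t by (simp add: z_def)
        then have "norm (y - x) = t * norm (z - x)" using t by simp
        then have "dist x y = t * dist x z" by (simp add: dist_norm norm_minus_commute)
        also have "\<dots> \<le> t * (dist x a + dist a z)" using t by (simp add: dist_triangle)
        also have "\<dots> \<le> t * (D + s)" using t D[OF x] za by (intro mult_left_mono) (auto simp: dist_commute)
        also have "\<dots> = r" using s D0 by (simp add: t_def)
        finally show ?thesis .
      qed
      ultimately show "y \<in> \<Omega> \<inter> cball x r" by simp
    qed
    have "measure lebesgue (ball c (t * s)) = (t * s) ^ DIM('a) * Henstock_Kurzweil_Integration.content (ball (0::'a) 1)"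
      using t s content_ball_conv_unit_ball[of "t * s" c] by simp
    also have "\<dots> = \<kappa> * r ^ DIM('a)" unfolding \<kappa>_def t_def by (simp add: power_mult_distrib field_simps)
    finally have eq: "measure lebesgue (ball c (t * s)) = \<kappa> * r ^ DIM('a)" .
    have "measure lebesgue (ball c (t * s)) \<le> measure lebesgue (\<Omega> \<inter> cball x r)"
      by (rule measure_mono_fmeasurable[OF sub]) (auto intro: lmeasurable_compact compact_Int_closed assms(1))
    then show ?thesis using eq by simp
  qed
  show ?thesis using k0 s D0 main by (intro exI[of _ \<kappa>] conjI exI[of _ "D + s"]) auto
qed

lemma key:
  fixes \<alpha> nn L \<kappa> \<rho> \<delta> H :: real
  assumes a: "\<alpha> > 0" and nn: "nn > 0" and L: "L > 0" and k: "\<kappa> > 0" and rho: "\<rho> > 0"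
    and d: "\<delta> \<ge> 0" and H0: "H \<ge> 0" and H1: "H \<le> 1"
    and hyp: "\<And>r. 0 < r \<Longrightarrow> r \<le> \<rho> \<Longrightarrow> 2 * L * r powr \<alpha> \<le> \<delta> / 2 \<Longrightarrow> \<delta> / 2 * \<kappa> * r powr nn \<le> H"
  shows "\<delta> \<le> max (2 / (\<kappa> * \<rho> powr nn)) ((2 * (4 * L) powr (nn / \<alpha>) / \<kappa>) powr (\<alpha> / (\<alpha> + nn)))
              * H powr (\<alpha> / (\<alpha> + nn))"
proof (cases "\<delta> = 0")
  case True
  have "0 \<le> 2 / (\<kappa> * \<rho> powr nn)" using k rho by simp
  then have "0 \<le> max (2 / (\<kappa> * \<rho> powr nn))
          ((2 * (4 * L) powr (nn / \<alpha>) / \<kappa>) powr (\<alpha> / (\<alpha> + nn)))" by linarith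
  then show ?thesis using True by simp
next
  case False
  then have dp: "\<delta> > 0" using d by simp
  define \<beta> where "\<beta> = \<alpha> / (\<alpha> + nn)"
  have b: "0 < \<beta>" "\<beta> \<le> 1" using a nn by (auto simp: \<beta>_def)
  define r1 where "r1 = (\<delta> / (4 * L)) powr (1 / \<alpha>)"
  have r1p: "r1 > 0" using dp L by (simp add: r1_def)
  have r1a: "r1 powr \<alpha> = \<delta> / (4 * L)" using dp L a by (simp add: r1_def powr_powr)
  define K where "K = 2 * (4 * L) powr (nn / \<alpha>) / \<kappa>"
  have Kp: "K > 0" using L k by (simp add: K_def)
  have c2: "\<delta> \<le> (K * H) powr \<beta>" if "r1 \<le> \<rho>"
  proof -
    have "2 * L * r1 powr \<alpha> \<le> \<delta> / 2" using r1a L by simp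
    then have "\<delta> / 2 * \<kappa> * r1 powr nn \<le> H" using hyp[OF r1p that] by simp
    moreover have "r1 powr nn = (\<delta> / (4 * L)) powr (nn / \<alpha>)" unfolding r1_def by (simp add: powr_powr)
    moreover have "(\<delta> / (4 * L)) powr (nn / \<alpha>) = \<delta> powr (nn / \<alpha>) / (4 * L) powr (nn / \<alpha>)"
      using dp L by (simp add: powr_divide)
    ultimately have i1: "\<delta> / 2 * \<kappa> * ((\<delta> powr (nn / \<alpha>) / (4 * L) powr (nn / \<alpha>))) \<le> H" by simp
    define P where "P = (4 * L) powr (nn / \<alpha>)"
    have Pp: "P > 0" using L by (simp add: P_def)
    have i2: "\<delta> / 2 * \<kappa> * (\<delta> powr (nn / \<alpha>) / P) \<le> H" using i1 by (simp add: P_def)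
    have "\<delta> * \<delta> powr (nn / \<alpha>) = (2 * P / \<kappa>) * (\<delta> / 2 * \<kappa> * (\<delta> powr (nn / \<alpha>) / P))"
      using Pp k by (simp add: field_simps)
    also have "\<dots> \<le> (2 * P / \<kappa>) * H" using i2 Pp k by (intro mult_left_mono) auto
    finally have "\<delta> * \<delta> powr (nn / \<alpha>) \<le> K * H" by (simp add: K_def P_def)
    moreover have "\<delta> * \<delta> powr (nn / \<alpha>) = \<delta> powr (1 / \<beta>)"
      proof -
      have "(\<alpha> + nn) / \<alpha> = 1 + nn / \<alpha>" using a by (simp add: field_simps)
      then have "\<delta> powr (1 / \<beta>) = \<delta> powr 1 * \<delta> powr (nn / \<alpha>)" by (simp add: \<beta>_def powr_add)
      then show ?thesis using dp by simp
    qed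
    ultimately have "\<delta> powr (1 / \<beta>) \<le> K * H" by simp
    then have "(\<delta> powr (1 / \<beta>)) powr \<beta> \<le> (K * H) powr \<beta>"
      using b by (intro powr_mono2) auto
    then show ?thesis using b dp by (simp add: powr_powr)
  qed
  have c1: "\<delta> \<le> 2 / (\<kappa> * \<rho> powr nn) * H powr \<beta>" if "\<not> r1 \<le> \<rho>"
  proof -
    have "\<rho> powr \<alpha> \<le> r1 powr \<alpha>" using that rho a by (intro powr_mono2) auto
    then have "2 * L * \<rho> powr \<alpha> \<le> \<delta> / 2" using r1a L by (simp add: field_simps)
    then have h: "\<delta> / 2 * \<kappa> * \<rho> powr nn \<le> H" using hyp[OF rho order_refl] by simp
    have "H \<le> H powr \<beta>"
    proof (cases "H = 0")
      case True then show ?thesis by simp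
    next
      case False
      then have "H powr 1 \<le> H powr \<beta>" using H0 H1 b by (intro powr_mono') auto
      then show ?thesis using False H0 by simp
    qed
    then have "\<delta> / 2 * \<kappa> * \<rho> powr nn \<le> H powr \<beta>" using h by simp
    then show ?thesis using k rho by (simp add: field_simps)
  qed
  have "(K * H) powr \<beta> = K powr \<beta> * H powr \<beta>" using Kp H0 by (simp add: powr_mult)
  then show ?thesis using c1 c2 b H0
    unfolding K_def[symmetric] \<beta>_def[symmetric]
    by (smt (verit, best) max.cobounded1 max.cobounded2 mult_right_mono powr_ge_zero)
qed

theorem mainTheorem15:
  fixes \<Omega> :: "(real ^ 'n) set" and m M C\<^sub>H p q :: real
  assumes "compact \<Omega>" and "convex \<Omega>" and "interior \<Omega> \<noteq> {}"
    and "\<exists>\<epsilon>>0. inner_ball_property \<Omega> \<epsilon>"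
    and "0 < m"
    and "p > real CARD('n)" and "p \<ge> 4"
    and "1 / p + 1 / q = 1"
  shows "\<exists>C. \<forall>(\<mu> :: (real ^ 'n) measure) f\<^sub>\<mu> (\<nu> :: (real ^ 'n) measure) f\<^sub>\<nu>
              (h :: real \<Rightarrow> real) (\<phi> :: real ^ 'n \<Rightarrow> real) (\<phi>R :: real \<Rightarrow> real ^ 'n \<Rightarrow> real).
    ( f\<^sub>\<mu> \<in> borel_measurable borel \<and> (\<forall>x. f\<^sub>\<mu> x \<ge> 0) \<and>
      \<mu> = density lborel (\<lambda>x. ennreal (f\<^sub>\<mu> x)) \<and> prob_space \<mu> \<and>
      measure_support \<mu> = \<Omega> \<and>
      (\<forall>x\<in>\<Omega>. m \<le> f\<^sub>\<mu> x \<and> f\<^sub>\<mu> x \<le> M) \<and>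
      f\<^sub>\<nu> \<in> borel_measurable borel \<and> (\<forall>x. f\<^sub>\<nu> x \<ge> 0) \<and>
      \<nu> = density lborel (\<lambda>x. ennreal (f\<^sub>\<nu> x)) \<and> prob_space \<nu> \<and>
      integrable \<nu> (\<lambda>x. (norm x)\<^sup>2) \<and>
      integrable \<nu> (\<lambda>x. norm x powr p) \<and>
      brenier_potential \<Omega> \<mu> \<nu> \<phi> \<and>
      (\<forall>R>0. measure \<nu> (ball 0 R) > 0 \<longrightarrow> brenier_potential \<Omega> \<mu> (trunc_measure \<nu> R) (\<phi>R R)) \<and>
      (\<forall>x\<in>\<Omega>. \<forall>y\<in>\<Omega>. \<bar>\<phi> x - \<phi> y\<bar> \<le> C\<^sub>H * dist x y powr (1 - CARD('n) / p)) \<and>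
      (\<forall>R>0. measure \<nu> (ball 0 R) > 0 \<longrightarrow>
         (\<forall>x\<in>\<Omega>. \<forall>y\<in>\<Omega>. \<bar>\<phi>R R x - \<phi>R R y\<bar> \<le> C\<^sub>H * dist x y powr (1 - CARD('n) / p))) \<and>
      (\<forall>R>0. measure \<nu> (ball 0 R) > 0 \<longrightarrow>
         integral \<Omega> (\<lambda>x. \<bar>\<phi>R R x - \<phi> x\<bar>) \<le> h R) \<and>
      (h \<longlongrightarrow> 0) at_top )
    \<longrightarrow> (\<exists>R\<^sub>0>0. \<forall>R\<ge>R\<^sub>0. \<forall>x\<in>\<Omega>.
          \<bar>\<phi>R R x - \<phi> x\<bar> \<le> C * h R powr ((1 - CARD('n) / p) / (1 + CARD('n) / q)))"
proof -
  obtain \<kappa> \<rho> where k: "\<kappa> > 0" and rho: "\<rho> > 0" and vk: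
    "\<And>x r. x \<in> \<Omega> \<Longrightarrow> 0 < r \<Longrightarrow> r \<le> \<rho> \<Longrightarrow> \<kappa> * r ^ CARD('n) \<le> measure lebesgue (\<Omega> \<inter> cball x r)"
    using vol[OF assms(1,2,3)] by auto
  define nn where "nn = real CARD('n)"
  define \<alpha> where "\<alpha> = 1 - nn / p"
  have nnp: "nn > 0" by (simp add: nn_def)
  have pp: "p > 0" using assms(6) nnp nn_def by linarith
  have ap: "\<alpha> > 0" using assms(6) pp by (simp add: \<alpha>_def nn_def field_simps)
  have expo: "(1 - CARD('n) / p) / (1 + CARD('n) / q) = \<alpha> / (\<alpha> + nn)"
  proof -
    have "1 / q = 1 - 1 / p" using assms(8) by simp
    then have "nn * (1 / q) = nn * (1 - 1 / p)" by simp
    then have "nn / q = nn - nn / p" by (simp add: right_diff_distrib)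
    then have e1: "1 + real CARD('n) / q = \<alpha> + nn" by (simp add: \<alpha>_def nn_def)
    have e2: "1 - real CARD('n) / p = \<alpha>" by (simp add: \<alpha>_def nn_def)
    show ?thesis by (simp only: e1 e2)
  qed
  define L where "L = 2 * max C\<^sub>H 1"
  have Lp: "L > 0" by (simp add: L_def)
  define C where "C = max (2 / (\<kappa> * \<rho> powr nn)) ((2 * (4 * L) powr (nn / \<alpha>) / \<kappa>) powr (\<alpha> / (\<alpha> + nn)))"
  show ?thesis
  proof (rule exI[of _ C], intro allI impI)
    fix \<mu> :: "(real ^ 'n) measure" and f\<^sub>\<mu> :: "real ^ 'n \<Rightarrow> real" and \<nu> :: "(real ^ 'n) measure"
      and f\<^sub>\<nu> :: "real ^ 'n \<Rightarrow> real" and h :: "real \<Rightarrow> real" and \<phi> :: "real ^ 'n \<Rightarrow> real"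
      and \<phi>R :: "real \<Rightarrow> real ^ 'n \<Rightarrow> real"
    assume A: "f\<^sub>\<mu> \<in> borel_measurable borel \<and> (\<forall>x. f\<^sub>\<mu> x \<ge> 0) \<and>
      \<mu> = density lborel (\<lambda>x. ennreal (f\<^sub>\<mu> x)) \<and> prob_space \<mu> \<and>
      measure_support \<mu> = \<Omega> \<and>
      (\<forall>x\<in>\<Omega>. m \<le> f\<^sub>\<mu> x \<and> f\<^sub>\<mu> x \<le> M) \<and>
      f\<^sub>\<nu> \<in> borel_measurable borel \<and> (\<forall>x. f\<^sub>\<nu> x \<ge> 0) \<and>
      \<nu> = density lborel (\<lambda>x. ennreal (f\<^sub>\<nu> x)) \<and> prob_space \<nu> \<and>
      integrable \<nu> (\<lambda>x. (norm x)\<^sup>2) \<and>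
      integrable \<nu> (\<lambda>x. norm x powr p) \<and>
      brenier_potential \<Omega> \<mu> \<nu> \<phi> \<and>
      (\<forall>R>0. measure \<nu> (ball 0 R) > 0 \<longrightarrow> brenier_potential \<Omega> \<mu> (trunc_measure \<nu> R) (\<phi>R R)) \<and>
      (\<forall>x\<in>\<Omega>. \<forall>y\<in>\<Omega>. \<bar>\<phi> x - \<phi> y\<bar> \<le> C\<^sub>H * dist x y powr (1 - CARD('n) / p)) \<and>
      (\<forall>R>0. measure \<nu> (ball 0 R) > 0 \<longrightarrow>
         (\<forall>x\<in>\<Omega>. \<forall>y\<in>\<Omega>. \<bar>\<phi>R R x - \<phi>R R y\<bar> \<le> C\<^sub>H * dist x y powr (1 - CARD('n) / p))) \<and>
      (\<forall>R>0. measure \<nu> (ball 0 R) > 0 \<longrightarrow>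
         integral \<Omega> (\<lambda>x. \<bar>\<phi>R R x - \<phi> x\<bar>) \<le> h R) \<and>
      (h \<longlongrightarrow> 0) at_top"
    have nuE: "\<nu> = density lborel (\<lambda>x. ennreal (f\<^sub>\<nu> x))" using A by (elim conjE) assumption
    have nuS: "sets \<nu> = sets borel" using nuE by simp
    have nuP: "prob_space \<nu>" using A by (elim conjE) assumption
    have Hphi: "\<forall>x\<in>\<Omega>. \<forall>y\<in>\<Omega>. \<bar>\<phi> x - \<phi> y\<bar> \<le> C\<^sub>H * dist x y powr \<alpha>"
      unfolding \<alpha>_def nn_def using A by (elim conjE) assumption
    have HphiR0: "\<forall>R>0. measure \<nu> (ball 0 R) > 0 \<longrightarrow>
       (\<forall>x\<in>\<Omega>. \<forall>y\<in>\<Omega>. \<bar>\<phi>R R x - \<phi>R R y\<bar> \<le> C\<^sub>H * dist x y powr \<alpha>)"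
      unfolding \<alpha>_def nn_def using A by (elim conjE) assumption
    have HphiR: "\<And>R. R > 0 \<Longrightarrow> measure \<nu> (ball 0 R) > 0 \<Longrightarrow>
       \<forall>x\<in>\<Omega>. \<forall>y\<in>\<Omega>. \<bar>\<phi>R R x - \<phi>R R y\<bar> \<le> C\<^sub>H * dist x y powr \<alpha>"
      using HphiR0 by blast
    have Hint0: "\<forall>R>0. measure \<nu> (ball 0 R) > 0 \<longrightarrow> integral \<Omega> (\<lambda>x. \<bar>\<phi>R R x - \<phi> x\<bar>) \<le> h R"
      using A by (elim conjE) assumption
    have Hint: "\<And>R. R > 0 \<Longrightarrow> measure \<nu> (ball 0 R) > 0 \<Longrightarrow> integral \<Omega> (\<lambda>x. \<bar>\<phi>R R x - \<phi> x\<bar>) \<le> h R"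
      using Hint0 by blast
    have hlim: "(h \<longlongrightarrow> 0) at_top" using A by (elim conjE) assumption
    obtain R1 where R1: "R1 > 0" "measure \<nu> (ball 0 R1) > 0"
    proof -
      have "\<exists>R>0. measure \<nu> (ball 0 R) > 0"
      proof (rule ccontr)
        assume nz: "\<not> (\<exists>R>0. measure \<nu> (ball 0 R) > 0)"
        have z: "measure \<nu> (ball 0 R) = 0" if Rp: "R > 0" for R
        proof -
          have "\<not> measure \<nu> (ball 0 R) > 0" using nz Rp by blast
          then show ?thesis using measure_nonneg[of \<nu> "ball 0 R"] by linarith
        qed
        have "emeasure \<nu> (\<Union>i. ball 0 (real (Suc i))) = 0"
        proof (rule emeasure_UN_eq_0)
          show "\<And>i. emeasure \<nu> (ball 0 (real (Suc i))) = 0"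
            using z finite_measure.emeasure_eq_measure[OF prob_space.axioms(1)[OF nuP]] by simp
          show "range (\<lambda>i. ball 0 (real (Suc i))) \<subseteq> sets \<nu>" unfolding nuS by (auto intro!: borel_open)
        qed
        moreover have "(\<Union>i. ball (0::real^'n) (real (Suc i))) = UNIV"
        proof -
          have "x \<in> ball 0 (real (Suc (nat \<lceil>norm x\<rceil>)))" for x :: "real^'n"
          proof -
            have "norm x \<le> real (nat \<lceil>norm x\<rceil>)" by linarith
            moreover have "real (Suc (nat \<lceil>norm x\<rceil>)) = real (nat \<lceil>norm x\<rceil>) + 1" by simp
            ultimately have "norm x < real (Suc (nat \<lceil>norm x\<rceil>))" by linarith
            then show ?thesis by simp
          qed
          then show ?thesis by blast
        qed
        moreover have "space \<nu> = UNIV" using sets_eq_imp_space_eq[OF nuS] by simp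
        ultimately have "emeasure \<nu> (space \<nu>) = 0" by simp
        then show False using prob_space.emeasure_space_1[OF nuP] by simp
      qed
      then show ?thesis using that by blast
    qed
    have mpos: "measure \<nu> (ball 0 R) > 0" if "R \<ge> R1" for R
    proof -
      have "measure \<nu> (ball 0 R1) \<le> measure \<nu> (ball 0 R)"
        using that nuS nuP by (intro finite_measure.finite_measure_mono prob_space.axioms(1)) auto
      then show ?thesis using R1 by simp
    qed
    obtain R2 where R2: "\<And>R. R \<ge> R2 \<Longrightarrow> \<bar>h R\<bar> < 1"
    proof -
      have "\<forall>\<^sub>F R in at_top. dist (h R) 0 < 1" using hlim by (rule tendstoD) simp
      then show ?thesis using that by (auto simp: eventually_at_top_linorder)
    qed
    show "\<exists>R\<^sub>0>0. \<forall>R\<ge>R\<^sub>0. \<forall>x\<in>\<Omega>.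
          \<bar>\<phi>R R x - \<phi> x\<bar> \<le> C * h R powr ((1 - CARD('n) / p) / (1 + CARD('n) / q))"
    proof (intro exI[of _ "max R1 R2"] conjI allI impI ballI)
      show "max R1 R2 > 0" using R1 by simp
      fix R x assume R: "max R1 R2 \<le> R" and x: "x \<in> \<Omega>"
      have Rp: "R > 0" and mR: "measure \<nu> (ball 0 R) > 0" and hR: "\<bar>h R\<bar> < 1"
        using R R1 mpos R2 by auto
      define g where "g = (\<lambda>y. \<phi>R R y - \<phi> y)"
      have Hg: "\<forall>y\<in>\<Omega>. \<forall>z\<in>\<Omega>. \<bar>g y - g z\<bar> \<le> L * dist y z powr \<alpha>"
      proof (intro ballI)
        fix y z assume y: "y \<in> \<Omega>" and z: "z \<in> \<Omega>"
        have "\<bar>g y - g z\<bar> \<le> \<bar>\<phi>R R y - \<phi>R R z\<bar> + \<bar>\<phi> y - \<phi> z\<bar>" by (simp add: g_def)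
        also have "\<dots> \<le> C\<^sub>H * dist y z powr \<alpha> + C\<^sub>H * dist y z powr \<alpha>"
          using HphiR[OF Rp mR] Hphi y z by (intro add_mono) auto
        also have "\<dots> \<le> L * dist y z powr \<alpha>"
        proof -
          have "C\<^sub>H * dist y z powr \<alpha> \<le> max C\<^sub>H 1 * dist y z powr \<alpha>" by (intro mult_right_mono) auto
          then show ?thesis by (simp add: L_def)
        qed
        finally show "\<bar>g y - g z\<bar> \<le> L * dist y z powr \<alpha>" .
      qed
      have gc: "continuous_on \<Omega> (\<lambda>y. \<bar>g y\<bar>)"
        using holder_cont[OF ap Lp Hg] by (intro continuous_intros)
      have gi: "(\<lambda>y. \<bar>g y\<bar>) integrable_on \<Omega>" by (rule cont_int[OF assms(1) gc])
      have intle: "integral \<Omega> (\<lambda>y. \<bar>g y\<bar>) \<le> h R" using Hint[OF Rp mR] by (simp add: g_def)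
      have H0: "h R \<ge> 0"
      proof -
        have "0 \<le> integral \<Omega> (\<lambda>y. \<bar>g y\<bar>)" using gi by (intro integral_nonneg) auto
        then show ?thesis using intle by simp
      qed
      have "\<bar>g x\<bar> \<le> C * h R powr (\<alpha> / (\<alpha> + nn))"
        unfolding C_def
      proof (rule key[OF ap nnp Lp k rho _ H0])
        show "0 \<le> \<bar>g x\<bar>" by simp
        show "h R \<le> 1" using hR by simp
        fix r assume r: "0 < r" "r \<le> \<rho>" and rl: "2 * L * r powr \<alpha> \<le> \<bar>g x\<bar> / 2"
        define K where "K = \<Omega> \<inter> cball x r"
        have Kc: "compact K" unfolding K_def using assms(1) by (intro compact_Int_closed) auto
        have lowb: "\<bar>g x\<bar> / 2 \<le> \<bar>g y\<bar>" if y: "y \<in> K" for y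
        proof -
          have yO: "y \<in> \<Omega>" and dy: "dist x y \<le> r" using y by (auto simp: K_def)
          have "dist x y powr \<alpha> \<le> r powr \<alpha>" using dy ap by (intro powr_mono2) auto
          then have m1: "L * dist x y powr \<alpha> \<le> L * r powr \<alpha>" using Lp by simp
          have "\<bar>g x - g y\<bar> \<le> L * dist x y powr \<alpha>" using Hg x yO by blast
          then have gxy: "\<bar>g x - g y\<bar> \<le> L * r powr \<alpha>" using m1 by linarith
          have tri: "\<bar>g x\<bar> \<le> \<bar>g x - g y\<bar> + \<bar>g y\<bar>" by (metis abs_triangle_ineq diff_add_cancel)
          have nn0: "0 \<le> L * r powr \<alpha>" using Lp by simp
          show ?thesis using gxy tri nn0 rl by linarith
        qed
        have icst: "integral K (\<lambda>y. \<bar>g x\<bar> / 2) = \<bar>g x\<bar> / 2 * measure lebesgue K"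
        proof -
          have "integral K (\<lambda>y. \<bar>g x\<bar> / 2) = integral K (\<lambda>y. \<bar>g x\<bar> / 2 * 1)" by simp
          also have "\<dots> = \<bar>g x\<bar> / 2 * integral K (\<lambda>y. 1)" by (rule integral_mult_right)
          also have "\<dots> = \<bar>g x\<bar> / 2 * measure lebesgue K"
            using lmeasure_integral[OF lmeasurable_compact[OF Kc]] by simp
          finally show ?thesis .
        qed
        have "\<bar>g x\<bar> / 2 * \<kappa> * r powr nn = \<bar>g x\<bar> / 2 * (\<kappa> * r ^ CARD('n))"
          using r by (simp add: nn_def powr_realpow)
        also have "\<dots> \<le> \<bar>g x\<bar> / 2 * measure lebesgue K"
          using vk[OF x r] by (intro mult_left_mono) (auto simp: K_def)
        also have "\<dots> = integral K (\<lambda>y. \<bar>g x\<bar> / 2)"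
          using icst by simp
        also have "\<dots> \<le> integral K (\<lambda>y. \<bar>g y\<bar>)"
        proof (rule integral_le)
          show "(\<lambda>y. \<bar>g x\<bar> / 2) integrable_on K" by (rule cont_int[OF Kc]) auto
          show "(\<lambda>y. \<bar>g y\<bar>) integrable_on K"
            by (rule cont_int[OF Kc]) (rule continuous_on_subset[OF gc], auto simp: K_def)
          show "\<And>y. y \<in> K \<Longrightarrow> \<bar>g x\<bar> / 2 \<le> \<bar>g y\<bar>" by (rule lowb)
        qed
        also have "\<dots> \<le> integral \<Omega> (\<lambda>y. \<bar>g y\<bar>)"
        proof (rule integral_subset_le)
          show "K \<subseteq> \<Omega>" by (auto simp: K_def)
          show "(\<lambda>y. \<bar>g y\<bar>) integrable_on K"
            by (rule cont_int[OF Kc]) (rule continuous_on_subset[OF gc], auto simp: K_def)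
          show "(\<lambda>y. \<bar>g y\<bar>) integrable_on \<Omega>" by (rule gi)
        qed auto
        also have "\<dots> \<le> h R" by (rule intle)
        finally show "\<bar>g x\<bar> / 2 * \<kappa> * r powr nn \<le> h R" .
      qed
      then show "\<bar>\<phi>R R x - \<phi> x\<bar> \<le> C * h R powr ((1 - CARD('n) / p) / (1 + CARD('n) / q))"
        by (simp add: g_def expo)
    qed
  qed
qed

end
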